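(* Let $k$ be a positive integer and $\alpha \in (0,1]$. If $\frac{\alpha}{1 - \ln \alpha} \geq \frac{2}{k + 1}$, then in any election there exists an $\alpha$-undominated committee of size $k$.
   Context: An election consists of a finite set $V$ of $n$ voters, a finite set $C$ of $m$ candidates, and for each voter $v$ a strict linear order $\succ_v$ on $C$ (her preference ranking). A committee is a subset $S \subseteq C$. For a candidate $a$ and committee $S$, write $a \succ_v S$ if $v$ prefers $a$ to every member of $S$, and let $\frac1n|a \succ S| = \frac1n|\{v \in V : a \succ_v S\}|$ (this is $0$ if $a \in S$). A committee $S$ is $\alpha$-undominated if for every candidate $a \in C$, $\frac1n|a \succ S| < \alpha$. *)

theory Defs
  imports Complex_Main
begin

text \<open>An election: finite nonempty voter set V, finite candidate set C, and for each
voter v a strict linear order on C, given by pref v a b meaning that v prefers a to b.\<close>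

definition strict_linear_order_on :: "'c set \<Rightarrow> ('c \<Rightarrow> 'c \<Rightarrow> bool) \<Rightarrow> bool" where
  "strict_linear_order_on C r \<longleftrightarrow>
     (\<forall>a\<in>C. \<not> r a a) \<and>
     (\<forall>a\<in>C. \<forall>b\<in>C. \<forall>c\<in>C. r a b \<longrightarrow> r b c \<longrightarrow> r a c) \<and>
     (\<forall>a\<in>C. \<forall>b\<in>C. a \<noteq> b \<longrightarrow> r a b \<or> r b a)"

definition election :: "'v set \<Rightarrow> 'c set \<Rightarrow> ('v \<Rightarrow> 'c \<Rightarrow> 'c \<Rightarrow> bool) \<Rightarrow> bool" where
  "election V C pref \<longleftrightarrow> finite V \<and> V \<noteq> {} \<and> finite C \<and>
     (\<forall>v\<in>V. strict_linear_order_on C (pref v))"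

definition prefer_set :: "'v set \<Rightarrow> ('v \<Rightarrow> 'c \<Rightarrow> 'c \<Rightarrow> bool) \<Rightarrow> 'c \<Rightarrow> 'c set \<Rightarrow> 'v set" where
  "prefer_set V pref a S = {v \<in> V. \<forall>b\<in>S. pref v a b}"

definition undominated ::
  "real \<Rightarrow> 'v set \<Rightarrow> 'c set \<Rightarrow> ('v \<Rightarrow> 'c \<Rightarrow> 'c \<Rightarrow> bool) \<Rightarrow> 'c set \<Rightarrow> bool" where
  "undominated \<alpha> V C pref S \<longleftrightarrow>
     (\<forall>a\<in>C. real (card (prefer_set V pref a S)) / real (card V) < \<alpha>)"

end

theory Submission
  imports Defs "HOL-Library.FuncSet"
begin




definition hedge_choice :: "'x set \<Rightarrow> 'j set \<Rightarrow> ('x \<Rightarrow> 'j \<Rightarrow> real) \<Rightarrow> real \<Rightarrow> real \<Rightarrow> ('j \<Rightarrow> real) \<Rightarrow> 'x" where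
  "hedge_choice X J M Vv \<eta> g = (SOME x. x \<in> X \<and>
      (\<Sum>j\<in>J. exp (\<eta> * g j) / (\<Sum>i\<in>J. exp (\<eta> * g i)) * M x j) \<le> Vv)"

primrec hedge_cum :: "'x set \<Rightarrow> 'j set \<Rightarrow> ('x \<Rightarrow> 'j \<Rightarrow> real) \<Rightarrow> real \<Rightarrow> real \<Rightarrow> nat \<Rightarrow> 'j \<Rightarrow> real" where
  "hedge_cum X J M Vv \<eta> 0 = (\<lambda>_. 0)"
| "hedge_cum X J M Vv \<eta> (Suc t) = (\<lambda>j. hedge_cum X J M Vv \<eta> t j +
      M (hedge_choice X J M Vv \<eta> (hedge_cum X J M Vv \<eta> t)) j)"

lemma minimax_approx:
  fixes M :: "'x \<Rightarrow> 'j \<Rightarrow> real"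
  assumes X: "finite X" "X \<noteq> {}" and J: "finite J" "J \<noteq> {}"
    and Mb: "\<And>x j. x \<in> X \<Longrightarrow> j \<in> J \<Longrightarrow> 0 \<le> M x j \<and> M x j \<le> B" and B: "B > 0"
    and br: "\<And>\<mu>. (\<forall>j\<in>J. 0 \<le> \<mu> j) \<Longrightarrow> (\<Sum>j\<in>J. \<mu> j) = 1 \<Longrightarrow> \<exists>x\<in>X. (\<Sum>j\<in>J. \<mu> j * M x j) \<le> Vv"
    and eps: "\<epsilon> > 0"
  shows "\<exists>p. (\<forall>x\<in>X. 0 \<le> p x) \<and> (\<Sum>x\<in>X. p x) = 1 \<and> (\<forall>j\<in>J. (\<Sum>x\<in>X. p x * M x j) \<le> Vv + \<epsilon>)"
proof -
  define \<eta> where "\<eta> = min (1/B) (\<epsilon>/(2*B\<^sup>2))"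
  have eta_pos: "\<eta> > 0" using B eps by (simp add: \<eta>_def)
  have etaB: "\<eta> * B \<le> 1" using B by (simp add: \<eta>_def min_def field_simps)
  have etaB2: "\<eta> * B\<^sup>2 \<le> \<epsilon>/2" using B by (simp add: \<eta>_def min_def field_simps)
  define cum where "cum = hedge_cum X J M Vv \<eta>"
  define xs where "xs t = hedge_choice X J M Vv \<eta> (cum t)" for t
  define \<Phi> where "\<Phi> t = (\<Sum>j\<in>J. exp (\<eta> * cum t j))" for t
  have Phi_pos: "\<Phi> t > 0" for t
    unfolding \<Phi>_def using J by (intro sum_pos) auto
  have xs: "xs t \<in> X \<and> (\<Sum>j\<in>J. exp (\<eta> * cum t j) / \<Phi> t * M (xs t) j) \<le> Vv" for t
  proof -
    define \<mu> where "\<mu> j = exp (\<eta> * cum t j) / \<Phi> t" for j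
    have "\<forall>j\<in>J. 0 \<le> \<mu> j" using Phi_pos[of t] by (simp add: \<mu>_def)
    moreover have "(\<Sum>j\<in>J. \<mu> j) = 1" using Phi_pos[of t]
      by (simp add: \<mu>_def sum_divide_distrib[symmetric] \<Phi>_def)
    ultimately obtain x where "x \<in> X" "(\<Sum>j\<in>J. \<mu> j * M x j) \<le> Vv" using br by blast
    then have "\<exists>x. x \<in> X \<and> (\<Sum>j\<in>J. exp (\<eta> * cum t j) / (\<Sum>i\<in>J. exp (\<eta> * cum t i)) * M x j) \<le> Vv"
      by (auto simp: \<mu>_def \<Phi>_def)
    from someI_ex[OF this] show ?thesis
      unfolding xs_def hedge_choice_def \<Phi>_def by simp
  qed
  have cum_Suc: "cum (Suc t) j = cum t j + M (xs t) j" for t j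
    by (simp add: cum_def xs_def)
  have step: "\<Phi> (Suc t) \<le> \<Phi> t * exp (\<eta> * Vv + \<eta>\<^sup>2 * B\<^sup>2)" for t
  proof -
    have EM: "(\<Sum>j\<in>J. exp (\<eta> * cum t j) * M (xs t) j) \<le> \<Phi> t * Vv"
    proof -
      have "(\<Sum>j\<in>J. exp (\<eta> * cum t j) * M (xs t) j) = \<Phi> t * (\<Sum>j\<in>J. exp (\<eta> * cum t j) / \<Phi> t * M (xs t) j)"
        using Phi_pos[of t] by (simp add: sum_distrib_left field_simps)
      also have "\<dots> \<le> \<Phi> t * Vv" using xs[of t] Phi_pos[of t] by (simp add: mult_left_mono)
      finally show ?thesis .
    qed
    have "\<Phi> (Suc t) = (\<Sum>j\<in>J. exp (\<eta> * cum t j) * exp (\<eta> * M (xs t) j))"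
      unfolding \<Phi>_def cum_Suc by (simp add: distrib_left exp_add)
    also have "\<dots> \<le> (\<Sum>j\<in>J. exp (\<eta> * cum t j) * (1 + \<eta> * M (xs t) j + \<eta>\<^sup>2 * B\<^sup>2))"
    proof (rule sum_mono)
      fix j assume j: "j \<in> J"
      have m: "0 \<le> M (xs t) j" "M (xs t) j \<le> B" using Mb[of "xs t" j] xs[of t] j by auto
      have a: "0 \<le> \<eta> * M (xs t) j" using m eta_pos by simp
      have b: "\<eta> * M (xs t) j \<le> 1"
        using mult_left_mono[OF m(2), of \<eta>] eta_pos etaB by linarith
      have "exp (\<eta> * M (xs t) j) \<le> 1 + \<eta> * M (xs t) j + (\<eta> * M (xs t) j)\<^sup>2"
        by (rule exp_bound[OF a b])
      also have "(\<eta> * M (xs t) j)\<^sup>2 \<le> \<eta>\<^sup>2 * B\<^sup>2"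
        using m eta_pos by (simp add: power_mult_distrib power_mono)
      finally show "exp (\<eta> * cum t j) * exp (\<eta> * M (xs t) j) \<le> exp (\<eta> * cum t j) * (1 + \<eta> * M (xs t) j + \<eta>\<^sup>2 * B\<^sup>2)"
        by simp
    qed
    also have "\<dots> = \<Phi> t * (1 + \<eta>\<^sup>2 * B\<^sup>2) + \<eta> * (\<Sum>j\<in>J. exp (\<eta> * cum t j) * M (xs t) j)"
      by (simp add: \<Phi>_def algebra_simps sum.distrib sum_distrib_left sum_distrib_right)
    also have "\<dots> \<le> \<Phi> t * (1 + (\<eta> * Vv + \<eta>\<^sup>2 * B\<^sup>2))"
      using eta_pos mult_left_mono[OF EM, of \<eta>] by (simp add: algebra_simps)
    also have "\<dots> \<le> \<Phi> t * exp (\<eta> * Vv + \<eta>\<^sup>2 * B\<^sup>2)"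
      using Phi_pos[of t] by (intro mult_left_mono) auto
    finally show ?thesis .
  qed
  have Phi_bound: "\<Phi> t \<le> card J * exp (real t * (\<eta> * Vv + \<eta>\<^sup>2 * B\<^sup>2))" for t
  proof (induction t)
    case 0
    then show ?case by (simp add: \<Phi>_def cum_def)
  next
    case (Suc t)
    have "\<Phi> (Suc t) \<le> \<Phi> t * exp (\<eta> * Vv + \<eta>\<^sup>2 * B\<^sup>2)" by (rule step)
    also have "\<dots> \<le> card J * exp (real t * (\<eta> * Vv + \<eta>\<^sup>2 * B\<^sup>2)) * exp (\<eta> * Vv + \<eta>\<^sup>2 * B\<^sup>2)"
      using Suc by (intro mult_right_mono) auto
    also have "\<dots> = card J * exp (real (Suc t) * (\<eta> * Vv + \<eta>\<^sup>2 * B\<^sup>2))"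
      by (simp add: mult.assoc exp_add[symmetric] algebra_simps)
    finally show ?case .
  qed
  have cum_sum: "cum t j = (\<Sum>s<t. M (xs s) j)" for t j
    by (induction t) (simp_all add: cum_Suc, simp add: cum_def)
  obtain T :: nat where T: "real T > 2 * ln (card J) / (\<eta> * \<epsilon>)" "T \<ge> 1"
  proof -
    obtain T0 :: nat where "real T0 > 2 * ln (card J) / (\<eta> * \<epsilon>)" using reals_Archimedean2 by blast
    then show ?thesis using that[of "T0 + 1"] by auto
  qed
  have Tpos: "real T > 0" using T by simp
  define p where "p x = (\<Sum>t<T. if xs t = x then 1 else 0) / real T" for x
  show ?thesis
  proof (intro exI conjI ballI)
    show "0 \<le> p x" for x by (simp add: p_def sum_nonneg)
    show "(\<Sum>x\<in>X. p x) = 1"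
    proof -
      have "(\<Sum>x\<in>X. p x) = (\<Sum>t<T. \<Sum>x\<in>X. if xs t = x then 1 else 0) / real T"
        unfolding p_def by (simp add: sum_divide_distrib[symmetric] sum.swap[of _ X])
      also have "\<dots> = 1" using xs X Tpos by (simp add: sum.delta)
      finally show ?thesis .
    qed
    fix j assume j: "j \<in> J"
    have "(\<Sum>x\<in>X. p x * M x j) = (\<Sum>t<T. \<Sum>x\<in>X. if xs t = x then M x j else 0) / real T"
      unfolding p_def by (simp add: sum_divide_distrib[symmetric] sum.swap[of _ X] sum_distrib_right if_distrib[where f="\<lambda>z. z * _"] cong: if_cong)
    also have "\<dots> = cum T j / real T" using xs X by (simp add: sum.delta cum_sum)
    also have "\<dots> \<le> Vv + \<epsilon>"
    proof -
      have "exp (\<eta> * cum T j) \<le> \<Phi> T"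
        unfolding \<Phi>_def using J j by (intro member_le_sum) auto
      also have "\<dots> \<le> card J * exp (real T * (\<eta> * Vv + \<eta>\<^sup>2 * B\<^sup>2))" by (rule Phi_bound)
      finally have "\<eta> * cum T j \<le> ln (card J) + real T * (\<eta> * Vv + \<eta>\<^sup>2 * B\<^sup>2)"
        using J by (simp add: ln_mult ln_le_cancel_iff[symmetric] card_gt_0_iff del: ln_le_cancel_iff)
      then have "cum T j \<le> ln (card J) / \<eta> + real T * (Vv + \<eta> * B\<^sup>2)"
        using eta_pos by (simp add: field_simps power2_eq_square)
      then have "cum T j / real T \<le> ln (card J) / (\<eta> * real T) + (Vv + \<eta> * B\<^sup>2)"
        using Tpos by (simp add: field_simps)
      moreover have "ln (card J) / (\<eta> * real T) \<le> \<epsilon> / 2"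
        using T eta_pos eps by (simp add: field_simps)
      ultimately show ?thesis using etaB2 by linarith
    qed
    finally show "(\<Sum>x\<in>X. p x * M x j) \<le> Vv + \<epsilon>" .
  qed
qed



lemma avg_exists:
  fixes \<mu> f :: "'j \<Rightarrow> real"
  assumes "finite J" "\<forall>j\<in>J. 0 \<le> \<mu> j" "(\<Sum>j\<in>J. \<mu> j) = 1" "(\<Sum>j\<in>J. \<mu> j * f j) \<le> Vv"
  shows "\<exists>j\<in>J. f j \<le> Vv"
proof (rule ccontr)
  assume "\<not> ?thesis"
  then have f: "\<forall>j\<in>J. f j > Vv" by auto
  obtain j0 where j0: "j0 \<in> J" "\<mu> j0 > 0"
  proof -
    have "\<exists>j\<in>J. \<mu> j \<noteq> 0" using assms(3) by (metis sum.neutral zero_neq_one)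
    then show ?thesis using that assms(2) by force
  qed
  have "(\<Sum>j\<in>J. \<mu> j * Vv) < (\<Sum>j\<in>J. \<mu> j * f j)"
  proof (rule sum_strict_mono_ex1[OF assms(1)])
    show "\<forall>j\<in>J. \<mu> j * Vv \<le> \<mu> j * f j" using f assms(2) by (simp add: mult_left_mono less_imp_le)
    show "\<exists>j\<in>J. \<mu> j * Vv < \<mu> j * f j" using j0 f by (intro bexI[of _ j0]) (auto intro: mult_strict_left_mono)
  qed
  then show False using assms by (simp add: sum_distrib_right[symmetric])
qed

lemma pair_half:
  fixes \<mu> :: "'j \<Rightarrow> real" and R :: "'j \<Rightarrow> 'j \<Rightarrow> bool"
  assumes "finite K" "\<forall>j\<in>K. 0 \<le> \<mu> j" "\<And>j j'. j \<in> K \<Longrightarrow> j' \<in> K \<Longrightarrow> R j j' \<Longrightarrow> \<not> R j' j"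
  shows "(\<Sum>j\<in>K. \<Sum>j'\<in>K. \<mu> j * \<mu> j' * (if R j j' then 1 else 0)) \<le> (\<Sum>j\<in>K. \<mu> j)\<^sup>2 / 2"
proof -
  let ?P = "(\<Sum>j\<in>K. \<Sum>j'\<in>K. \<mu> j * \<mu> j' * (if R j j' then 1 else 0))"
  have swap: "?P = (\<Sum>j\<in>K. \<Sum>j'\<in>K. \<mu> j * \<mu> j' * (if R j' j then 1 else 0))"
    by (subst sum.swap) (simp add: mult.commute)
  have "2 * ?P = (\<Sum>j\<in>K. \<Sum>j'\<in>K. \<mu> j * \<mu> j' * ((if R j j' then 1 else 0) + (if R j' j then 1 else 0)))"
  proof -
    have "2 * ?P = ?P + (\<Sum>j\<in>K. \<Sum>j'\<in>K. \<mu> j * \<mu> j' * (if R j' j then 1 else 0))"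
      using swap by simp
    also have "\<dots> = (\<Sum>j\<in>K. \<Sum>j'\<in>K. \<mu> j * \<mu> j' * ((if R j j' then 1 else 0) + (if R j' j then 1 else 0)))"
      by (simp add: sum.distrib[symmetric] algebra_simps)
    finally show ?thesis .
  qed
  also have "\<dots> \<le> (\<Sum>j\<in>K. \<Sum>j'\<in>K. \<mu> j * \<mu> j')"
  proof (intro sum_mono)
    fix j j' assume "j \<in> K" "j' \<in> K"
    then show "\<mu> j * \<mu> j' * ((if R j j' then 1 else 0) + (if R j' j then 1 else 0)) \<le> \<mu> j * \<mu> j'"
      using assms(2) assms(3)[of j j'] by auto
  qed
  also have "\<dots> = (\<Sum>j\<in>K. \<mu> j)\<^sup>2"
    by (simp add: power2_eq_square sum_product)
  finally show ?thesis by simp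
qed

lemma sum_sq_ge:
  fixes s :: "'v \<Rightarrow> real"
  assumes "finite V" "V \<noteq> {}"
  shows "(\<Sum>v\<in>V. s v)\<^sup>2 / card V \<le> (\<Sum>v\<in>V. (s v)\<^sup>2)"
proof -
  define m where "m = (\<Sum>v\<in>V. s v) / card V"
  have n: "real (card V) > 0" using assms by (simp add: card_gt_0_iff)
  have "0 \<le> (\<Sum>v\<in>V. (s v - m)\<^sup>2)" by (simp add: sum_nonneg)
  also have "\<dots> = (\<Sum>v\<in>V. (s v)\<^sup>2) - 2 * m * (\<Sum>v\<in>V. s v) + card V * m\<^sup>2"
    by (simp add: power2_diff sum.distrib sum_subtractf sum_distrib_left sum_distrib_right algebra_simps)
  also have "\<dots> = (\<Sum>v\<in>V. (s v)\<^sup>2) - (\<Sum>v\<in>V. s v)\<^sup>2 / card V"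
    using n by (simp add: m_def field_simps power2_eq_square)
  finally show ?thesis by simp
qed

lemma best_response:
  fixes pref :: "'v \<Rightarrow> 'c \<Rightarrow> 'c \<Rightarrow> bool" and \<mu> :: "'c \<times> 'v set \<Rightarrow> real"
  assumes V: "finite V" "V \<noteq> {}" and C: "finite C"
    and asym: "\<And>v a b. v \<in> V \<Longrightarrow> a \<in> C \<Longrightarrow> b \<in> C \<Longrightarrow> pref v a b \<Longrightarrow> \<not> pref v b a"
    and J: "J = {(a, W). a \<in> C \<and> W \<subseteq> V \<and> card W = r}"
    and mu: "\<forall>j\<in>J. 0 \<le> \<mu> j" "(\<Sum>j\<in>J. \<mu> j) = 1"
  shows "\<exists>c\<in>C. (\<Sum>j\<in>J. \<mu> j * real (card {v \<in> snd j. pref v (fst j) c})) \<le> real r - (real r)\<^sup>2 / (2 * real (card V))"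
proof -
  have finJ: "finite J"
  proof -
    have "J \<subseteq> C \<times> Pow V" using J by auto
    then show ?thesis using V C finite_subset by blast
  qed
  define I where "I v (j :: 'c \<times> 'v set) = (if v \<in> snd j then 1 else 0 :: real)" for v j
  define Pr where "Pr v a c = (if pref v a c then 1 else 0 :: real)" for v a c
  have cardsum: "real (card {v \<in> snd j. pref v (fst j) c}) = (\<Sum>v\<in>V. I v j * Pr v (fst j) c)" if "j \<in> J" for j c
  proof -
    have sub: "snd j \<subseteq> V" using that J by auto
    have fin: "finite (snd j)" using sub V finite_subset by blast
    have "real (card {v \<in> snd j. pref v (fst j) c}) = (\<Sum>v\<in>snd j. Pr v (fst j) c)"
      using fin by (simp add: Pr_def sum.If_cases Int_def)
    also have "\<dots> = (\<Sum>v\<in>V. I v j * Pr v (fst j) c)"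
      using sub V by (simp add: I_def if_distrib[where f="\<lambda>z. z * _"] sum.If_cases Int_absorb1 cong: if_cong)
    finally show ?thesis .
  qed
  define s where "s v = (\<Sum>j\<in>J. \<mu> j * I v j)" for v
  define F where "F v = (\<Sum>j\<in>J. \<Sum>j'\<in>J. \<mu> j * \<mu> j' * I v j * Pr v (fst j) (fst j'))" for v
  have main: "(\<Sum>j'\<in>J. \<mu> j' * (\<Sum>j\<in>J. \<mu> j * real (card {v \<in> snd j. pref v (fst j) (fst j')}))) = (\<Sum>v\<in>V. F v)"
  proof -
    have "(\<Sum>j'\<in>J. \<mu> j' * (\<Sum>j\<in>J. \<mu> j * real (card {v \<in> snd j. pref v (fst j) (fst j')})))
        = (\<Sum>j'\<in>J. \<mu> j' * (\<Sum>j\<in>J. \<mu> j * (\<Sum>v\<in>V. I v j * Pr v (fst j) (fst j'))))"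
      by (intro sum.cong refl arg_cong2[where f="(*)"]) (simp add: cardsum)
    also have "\<dots> = (\<Sum>j'\<in>J. \<Sum>j\<in>J. \<Sum>v\<in>V. \<mu> j * \<mu> j' * I v j * Pr v (fst j) (fst j'))"
      by (simp add: sum_distrib_left mult.assoc mult.left_commute)
    also have "\<dots> = (\<Sum>v\<in>V. \<Sum>j'\<in>J. \<Sum>j\<in>J. \<mu> j * \<mu> j' * I v j * Pr v (fst j) (fst j'))"
      by (simp add: sum.swap[of _ J V])
    also have "\<dots> = (\<Sum>v\<in>V. F v)"
      unfolding F_def by (rule sum.cong[OF refl], rule sum.swap)
    finally show ?thesis .
  qed
  have Fv: "F v \<le> s v - (s v)\<^sup>2 / 2" if v: "v \<in> V" for v
  proof -
    define K where "K = {j \<in> J. v \<in> snd j}"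
    have finK: "finite K" using finJ K_def by simp
    have sK: "s v = (\<Sum>j\<in>K. \<mu> j)"
    proof -
      have "s v = (\<Sum>j\<in>J. if v \<in> snd j then \<mu> j else 0)"
        unfolding s_def I_def by (intro sum.cong) auto
      then show ?thesis unfolding K_def using finJ by (simp add: sum.inter_filter)
    qed
    have s1: "(\<Sum>j\<in>J - K. \<mu> j) = 1 - s v"
      using sK mu(2) sum_diff[OF finJ, of K \<mu>] K_def by auto
    have split: "F v = (\<Sum>j\<in>K. \<Sum>j'\<in>K. \<mu> j * \<mu> j' * Pr v (fst j) (fst j')) + (\<Sum>j\<in>K. \<Sum>j'\<in>J - K. \<mu> j * \<mu> j' * Pr v (fst j) (fst j'))"
    proof -
      have "F v = (\<Sum>j\<in>J. if v \<in> snd j then (\<Sum>j'\<in>J. \<mu> j * \<mu> j' * Pr v (fst j) (fst j')) else 0)"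
        unfolding F_def I_def by (intro sum.cong) auto
      also have "\<dots> = (\<Sum>j\<in>K. \<Sum>j'\<in>J. \<mu> j * \<mu> j' * Pr v (fst j) (fst j'))"
        unfolding K_def using finJ by (simp add: sum.inter_filter)
      also have "\<dots> = (\<Sum>j\<in>K. (\<Sum>j'\<in>K. \<mu> j * \<mu> j' * Pr v (fst j) (fst j')) + (\<Sum>j'\<in>J - K. \<mu> j * \<mu> j' * Pr v (fst j) (fst j')))"
        by (intro sum.cong refl, subst sum.subset_diff[of K J]) (auto simp: K_def finJ)
      finally show ?thesis by (simp add: sum.distrib)
    qed
    have p1: "(\<Sum>j\<in>K. \<Sum>j'\<in>K. \<mu> j * \<mu> j' * Pr v (fst j) (fst j')) \<le> (s v)\<^sup>2 / 2"
      unfolding sK Pr_def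
      by (rule pair_half[OF finK]) (use mu(1) K_def J asym[OF v] in auto)
    have p2: "(\<Sum>j\<in>K. \<Sum>j'\<in>J - K. \<mu> j * \<mu> j' * Pr v (fst j) (fst j')) \<le> (\<Sum>j\<in>K. \<Sum>j'\<in>J - K. \<mu> j * \<mu> j')"
      by (intro sum_mono) (use mu(1) K_def in \<open>auto simp: Pr_def\<close>)
    also have "\<dots> = s v * (1 - s v)"
      by (simp add: sum_product[symmetric] sK s1)
    finally show ?thesis using split p1 by (simp add: algebra_simps power2_eq_square)
  qed
  have ssum: "(\<Sum>v\<in>V. s v) = r"
  proof -
    have "(\<Sum>v\<in>V. s v) = (\<Sum>j\<in>J. \<mu> j * (\<Sum>v\<in>V. I v j))"
      unfolding s_def by (simp add: sum.swap[of _ V] sum_distrib_left)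
    also have "\<dots> = (\<Sum>j\<in>J. \<mu> j * r)"
    proof (intro sum.cong refl)
      fix j assume j: "j \<in> J"
      then have "snd j \<subseteq> V" "card (snd j) = r" using J by auto
      then have "(\<Sum>v\<in>V. I v j) = r" using V
        by (simp add: I_def sum.If_cases Int_absorb1)
      then show "\<mu> j * (\<Sum>v\<in>V. I v j) = \<mu> j * r" by simp
    qed
    also have "\<dots> = r" using mu(2) by (simp add: sum_distrib_right[symmetric])
    finally show ?thesis .
  qed
  have "(\<Sum>j'\<in>J. \<mu> j' * (\<Sum>j\<in>J. \<mu> j * real (card {v \<in> snd j. pref v (fst j) (fst j')}))) \<le> (\<Sum>v\<in>V. s v - (s v)\<^sup>2 / 2)"
    using main Fv by (simp add: sum_mono)
  also have "\<dots> = r - (\<Sum>v\<in>V. (s v)\<^sup>2) / 2"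
    by (simp add: sum_subtractf ssum sum_divide_distrib)
  also have "\<dots> \<le> real r - (real r)\<^sup>2 / (2 * real (card V))"
    using sum_sq_ge[OF V, of s] ssum by (simp add: field_simps)
  finally have L: "(\<Sum>j'\<in>J. \<mu> j' * (\<Sum>j\<in>J. \<mu> j * real (card {v \<in> snd j. pref v (fst j) (fst j')}))) \<le> real r - (real r)\<^sup>2 / (2 * real (card V))" .
  obtain j' where j': "j' \<in> J" "(\<Sum>j\<in>J. \<mu> j * real (card {v \<in> snd j. pref v (fst j) (fst j')})) \<le> real r - (real r)\<^sup>2 / (2 * real (card V))"
    using avg_exists[OF finJ mu L] by blast
  moreover have "fst j' \<in> C" using j' J by auto
  ultimately show ?thesis by blast
qed



lemma exists_max_elem:
  assumes "finite A" "A \<noteq> {}"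
    and trans: "\<And>a b c. a \<in> A \<Longrightarrow> b \<in> A \<Longrightarrow> c \<in> A \<Longrightarrow> R a b \<Longrightarrow> R b c \<Longrightarrow> R a c"
    and total: "\<And>a b. a \<in> A \<Longrightarrow> b \<in> A \<Longrightarrow> a \<noteq> b \<Longrightarrow> R a b \<or> R b a"
  shows "\<exists>c\<in>A. \<forall>d\<in>A. d \<noteq> c \<longrightarrow> R c d"
  using assms
proof (induction A rule: finite_ne_induct)
  case (singleton x)
  then show ?case by auto
next
  case (insert x F)
  then obtain c where c: "c \<in> F" "\<forall>d\<in>F. d \<noteq> c \<longrightarrow> R c d" by (metis insert_iff)
  show ?case
  proof (cases "R c x")
    case True
    then show ?thesis using c by (intro bexI[of _ c]) auto
  next
    case False
    then have "R x c" using insert.prems(2)[of x c] c insert.hyps by auto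
    then show ?thesis using c insert.hyps insert.prems(1)[of x c] by (intro bexI[of _ x]) auto
  qed
qed

lemma pow_ineq:
  fixes u w :: real
  assumes "0 \<le> u" "u \<le> w"
  shows "u ^ (k+1) + (k+1) * (w - u) * u ^ k \<le> w ^ (k+1)"
proof -
  have "w ^ Suc k - u ^ Suc k = (w - u) * (\<Sum>i<Suc k. w ^ i * u ^ (k - i))"
    by (rule diff_power_eq_sum)
  moreover have "(\<Sum>i<Suc k. w ^ i * u ^ (k - i)) \<ge> (\<Sum>i<Suc k. u ^ k)"
  proof (rule sum_mono)
    fix i assume "i \<in> {..<Suc k}"
    then have "u ^ k = u ^ i * u ^ (k - i)" by (simp add: power_add[symmetric])
    also have "\<dots> \<le> w ^ i * u ^ (k - i)"
      using assms by (intro mult_right_mono power_mono) auto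
    finally show "u ^ k \<le> w ^ i * u ^ (k - i)" .
  qed
  ultimately have "w ^ Suc k - u ^ Suc k \<ge> (w - u) * ((k+1) * u ^ k)"
    using assms by (simp add: mult_left_mono)
  then show ?thesis by (simp add: algebra_simps)
qed

lemma riemann:
  fixes p :: "'c \<Rightarrow> real"
  assumes "finite A" and p: "\<forall>c\<in>A. 0 \<le> p c" and L: "0 \<le> L"
    and irrefl: "\<And>a. a \<in> A \<Longrightarrow> \<not> R a a"
    and trans: "\<And>a b c. a \<in> A \<Longrightarrow> b \<in> A \<Longrightarrow> c \<in> A \<Longrightarrow> R a b \<Longrightarrow> R b c \<Longrightarrow> R a c"
    and total: "\<And>a b. a \<in> A \<Longrightarrow> b \<in> A \<Longrightarrow> a \<noteq> b \<Longrightarrow> R a b \<or> R b a"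
  shows "(\<Sum>c\<in>A. max 0 (min ((\<Sum>d\<in>{d\<in>A. R c d}. p d) + p c) L - (\<Sum>d\<in>{d\<in>A. R c d}. p d))
            * (\<Sum>d\<in>{d\<in>A. R c d}. p d) ^ k)
         \<le> (min (\<Sum>c\<in>A. p c) L) ^ (k+1) / (k+1)"
  using assms(1,2,4,5,6)
proof (induction A rule: finite_psubset_induct)
  case (psubset A)
  show ?case
  proof (cases "A = {}")
    case True
    then show ?thesis using L by simp
  next
    case False
    obtain c0 where c0: "c0 \<in> A" "\<forall>d\<in>A. d \<noteq> c0 \<longrightarrow> R c0 d"
      using exists_max_elem[OF psubset.hyps(1) False, of R] psubset.prems by blast
    define A' where "A' = A - {c0}"
    have A'sub: "A' \<subset> A" using c0 A'_def by auto
    have IH: "(\<Sum>c\<in>A'. max 0 (min ((\<Sum>d\<in>{d\<in>A'. R c d}. p d) + p c) L - (\<Sum>d\<in>{d\<in>A'. R c d}. p d))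
            * (\<Sum>d\<in>{d\<in>A'. R c d}. p d) ^ k)
         \<le> (min (\<Sum>c\<in>A'. p c) L) ^ (k+1) / (k+1)"
    proof (rule psubset.IH[OF A'sub])
      show "\<forall>c\<in>A'. 0 \<le> p c" using psubset.prems(1) A'_def by auto
      show "\<not> R a a" if "a \<in> A'" for a using psubset.prems(2)[of a] that A'_def by auto
      show "R a c" if "a \<in> A'" "b \<in> A'" "c \<in> A'" "R a b" "R b c" for a b c
        using psubset.prems(3)[of a b c] that A'_def by auto
      show "R a b \<or> R b a" if "a \<in> A'" "b \<in> A'" "a \<noteq> b" for a b
        using psubset.prems(4)[of a b] that A'_def by auto
    qed
    have same: "{d\<in>A. R c d} = {d\<in>A'. R c d}" if "c \<in> A'" for c
    proof -
      have "\<not> R c c0" using c0 that A'_def psubset.prems(2)[of c0] psubset.prems(3)[of c0 c c0] by auto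
      then show ?thesis using A'_def by auto
    qed
    have top: "{d\<in>A. R c0 d} = A'" using c0 A'_def psubset.prems(2)[of c0] by auto
    define M' where "M' = (\<Sum>c\<in>A'. p c)"
    have M'0: "0 \<le> M'" unfolding M'_def using psubset.prems(1) A'_def by (intro sum_nonneg) auto
    have sumA: "(\<Sum>c\<in>A. p c) = M' + p c0"
      unfolding M'_def A'_def using psubset.hyps(1) c0 by (simp add: sum.remove)
    have finA': "finite A'" using psubset.hyps(1) A'_def by simp
    let ?f = "\<lambda>B c. max 0 (min ((\<Sum>d\<in>{d\<in>B. R c d}. p d) + p c) L - (\<Sum>d\<in>{d\<in>B. R c d}. p d))
            * (\<Sum>d\<in>{d\<in>B. R c d}. p d) ^ k"
    have "(\<Sum>c\<in>A. ?f A c) = ?f A c0 + (\<Sum>c\<in>A'. ?f A c)"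
      unfolding A'_def using psubset.hyps(1) c0 by (simp add: sum.remove)
    also have "(\<Sum>c\<in>A'. ?f A c) = (\<Sum>c\<in>A'. ?f A' c)"
      by (intro sum.cong refl) (simp add: same)
    also have "?f A c0 = max 0 (min (M' + p c0) L - M') * M' ^ k"
      by (simp add: top M'_def)
    finally have eq: "(\<Sum>c\<in>A. ?f A c) = max 0 (min (M' + p c0) L - M') * M' ^ k + (\<Sum>c\<in>A'. ?f A' c)" .
    have "max 0 (min (M' + p c0) L - M') * M' ^ k + (min M' L) ^ (k+1) / (k+1) \<le> (min (M' + p c0) L) ^ (k+1) / (k+1)"
    proof (cases "L \<le> M'")
      case True
      have pc0: "0 \<le> p c0" using c0 psubset.prems(1) by auto
      have e1: "min (M' + p c0) L = L" "min M' L = L" using True pc0 by auto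
      have e2: "max 0 (L - M') = 0" using True by auto
      show ?thesis unfolding e1 e2 by simp
    next
      case False
      define N where "N = min (M' + p c0) L"
      have N: "M' \<le> N" using False c0 psubset.prems(1) by (simp add: N_def)
      have pw: "M' ^ (k+1) + (real k+1) * (N - M') * M' ^ k \<le> N ^ (k+1)" using pow_ineq[OF M'0 N, of k] by simp
      have mx: "max 0 (N - M') = N - M'" using N by simp
      have mn: "min M' L = M'" using False by simp
      have "(N - M') * M' ^ k + M' ^ (k+1) / (real k+1) = (M' ^ (k+1) + (real k+1) * (N - M') * M' ^ k) / (real k+1)"
        by (simp add: field_simps)
      also have "\<dots> \<le> N ^ (k+1) / (real k+1)" using pw by (intro divide_right_mono) auto
      finally show ?thesis unfolding N_def[symmetric] mx mn by (simp add: add.commute)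
    qed
    then show ?thesis using eq IH by (simp add: sumA M'_def)
  qed
qed



definition qb :: "'c set \<Rightarrow> ('c \<Rightarrow> 'c \<Rightarrow> bool) \<Rightarrow> ('c \<Rightarrow> real) \<Rightarrow> 'c \<Rightarrow> real" where
  "qb C R p c = (\<Sum>d\<in>{d\<in>C. R c d}. p d)"

definition wt :: "'c set \<Rightarrow> ('c \<Rightarrow> 'c \<Rightarrow> bool) \<Rightarrow> ('c \<Rightarrow> real) \<Rightarrow> real \<Rightarrow> 'c \<Rightarrow> real" where
  "wt C R p Lt c = max 0 (min (qb C R p c + p c) Lt - qb C R p c)"

lemma below_ge:
  fixes p :: "'c \<Rightarrow> real"
  assumes fin: "finite C" and p: "\<forall>c\<in>C. 0 \<le> p c" and s1: "(\<Sum>c\<in>C. p c) = 1"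
    and lin: "strict_linear_order_on C R"
    and S: "S \<subseteq> C" and a: "a \<in> C" and aS: "\<forall>s\<in>S. R a s"
  shows "1 - (\<Sum>c\<in>{c\<in>C. \<forall>s\<in>S. R c s}. p c) \<le> qb C R p a"
proof -
  let ?T = "{c\<in>C. \<forall>s\<in>S. R c s}"
  have "(\<Sum>c\<in>C. p c) = (\<Sum>c\<in>?T. p c) + (\<Sum>c\<in>C - ?T. p c)"
    using fin by (subst sum.subset_diff[of ?T C]) auto
  moreover have "(\<Sum>c\<in>C - ?T. p c) \<le> qb C R p a"
    unfolding qb_def
  proof (rule sum_mono2)
    show "finite {d \<in> C. R a d}" using fin by simp
    show "C - ?T \<subseteq> {d \<in> C. R a d}"
    proof
      fix c assume c: "c \<in> C - ?T"
      then obtain s where s: "s \<in> S" "\<not> R c s" by auto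
      have "c = s \<or> R s c" using lin s c S unfolding strict_linear_order_on_def by blast
      then have "R a c" using aS s lin c S a unfolding strict_linear_order_on_def by blast
      then show "c \<in> {d \<in> C. R a d}" using c by auto
    qed
    show "0 \<le> p b" if "b \<in> {d \<in> C. R a d} - (C - ?T)" for b using p that by auto
  qed
  ultimately show ?thesis using s1 by linarith
qed

lemma threshold:
  fixes p :: "'c \<Rightarrow> real"
  assumes fin: "finite C" and p: "\<forall>c\<in>C. 0 \<le> p c" and s1: "(\<Sum>c\<in>C. p c) = 1"
    and lin: "strict_linear_order_on C R"
    and T: "T \<subseteq> C" and t: "0 \<le> t"
  shows "(\<Sum>c\<in>T. p c) \<le> t + (\<Sum>c\<in>T. wt C R p (1 - t) c)"
proof -
  define q where "q = qb C R p"
  define w where "w = wt C R p (1 - t)"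
  define e where "e c = p c - w c" for c
  have q0: "0 \<le> q c" for c unfolding q_def qb_def using p by (intro sum_nonneg) auto
  have e0: "0 \<le> e c" if "c \<in> C" for c
    using p that by (auto simp: e_def w_def wt_def q_def[symmetric])
  have "(\<Sum>c\<in>T. p c) - (\<Sum>c\<in>T. w c) = (\<Sum>c\<in>T. e c)" by (simp add: e_def sum_subtractf)
  also have "\<dots> \<le> (\<Sum>c\<in>C. e c)" using T fin e0 by (intro sum_mono2) auto
  also have "\<dots> \<le> t"
  proof -
    define E where "E = {c\<in>C. q c + p c > 1 - t}"
    have finE: "finite E" using fin E_def by simp
    have "(\<Sum>c\<in>C. e c) = (\<Sum>c\<in>E. e c)"
    proof (rule sum.mono_neutral_right[OF fin])
      show "E \<subseteq> C" using E_def by auto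
      show "\<forall>c\<in>C - E. e c = 0"
        using p q0 by (auto simp: E_def e_def w_def wt_def q_def[symmetric] min_def max_def)
    qed
    also have "\<dots> \<le> t"
    proof (cases "E = {}")
      case True
      then show ?thesis using t by simp
    next
      case False
      have lin': "\<And>a. a \<in> C \<Longrightarrow> \<not> R a a"
        "\<And>a b c. a \<in> C \<Longrightarrow> b \<in> C \<Longrightarrow> c \<in> C \<Longrightarrow> R a b \<Longrightarrow> R b c \<Longrightarrow> R a c"
        "\<And>a b. a \<in> C \<Longrightarrow> b \<in> C \<Longrightarrow> a \<noteq> b \<Longrightarrow> R a b \<or> R b a"
        using lin unfolding strict_linear_order_on_def by blast+
      obtain cs where cs: "cs \<in> E" "\<forall>d\<in>E. d \<noteq> cs \<longrightarrow> R d cs"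
        using exists_max_elem[OF finE False, of "\<lambda>x y. R y x"] lin'(2,3) E_def by blast
      have csC: "cs \<in> C" using cs E_def by auto
      define Ab where "Ab = {d\<in>C. R d cs}"
      have mass: "(\<Sum>d\<in>Ab. p d) = 1 - p cs - q cs"
      proof -
        have "C - {cs} = Ab \<union> {d\<in>C. R cs d}" using lin'(3)[OF csC] lin'(1)[OF csC] unfolding Ab_def by auto
        moreover have "Ab \<inter> {d\<in>C. R cs d} = {}" unfolding Ab_def using lin'(1,2) csC by blast
        ultimately have "(\<Sum>d\<in>C - {cs}. p d) = (\<Sum>d\<in>Ab. p d) + q cs"
          unfolding q_def qb_def using fin by (simp add: sum.union_disjoint[symmetric] Ab_def)
        moreover have "(\<Sum>d\<in>C. p d) = p cs + (\<Sum>d\<in>C - {cs}. p d)"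
          using fin csC by (simp add: sum.remove)
        ultimately show ?thesis using s1 by linarith
      qed
      have "(\<Sum>c\<in>E. e c) = e cs + (\<Sum>c\<in>E - {cs}. e c)"
        using finE cs by (simp add: sum.remove)
      also have "(\<Sum>c\<in>E - {cs}. e c) \<le> (\<Sum>c\<in>E - {cs}. p c)"
        using p q0 E_def by (intro sum_mono) (auto simp: e_def w_def wt_def q_def[symmetric])
      also have "\<dots> \<le> (\<Sum>d\<in>Ab. p d)"
        using cs fin p unfolding Ab_def E_def by (intro sum_mono2) auto
      also have "e cs \<le> p cs - (1 - t - q cs)"
        using cs E_def by (simp add: e_def w_def wt_def q_def[symmetric])
      finally show ?thesis using mass by linarith
    qed
    finally show ?thesis .
  qed
  finally show ?thesis by (simp add: w_def)
qed

lemma tuple_expect: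
  fixes p g :: "'c \<Rightarrow> real"
  assumes fin: "finite C"
  shows "(\<Sum>f\<in>PiE {..<k} (\<lambda>_. C). (\<Prod>i<k. p (f i)) * (\<Sum>c\<in>C. if (\<forall>i<k. R c (f i)) then g c else 0))
       = (\<Sum>c\<in>C. g c * (\<Sum>d\<in>{d\<in>C. R c d}. p d) ^ k)"
proof -
  have "(\<Sum>f\<in>PiE {..<k} (\<lambda>_. C). (\<Prod>i<k. p (f i)) * (\<Sum>c\<in>C. if (\<forall>i<k. R c (f i)) then g c else 0))
      = (\<Sum>c\<in>C. g c * (\<Sum>f\<in>PiE {..<k} (\<lambda>_. C). if (\<forall>i<k. R c (f i)) then (\<Prod>i<k. p (f i)) else 0))"
    by (simp add: sum_distrib_left sum_distrib_right sum.swap[of _ "PiE {..<k} (\<lambda>_. C)" C] if_distrib[where f="\<lambda>z. _ * z"] mult.commute cong: if_cong)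
  also have "\<dots> = (\<Sum>c\<in>C. g c * (\<Sum>d\<in>{d\<in>C. R c d}. p d) ^ k)"
  proof (intro sum.cong refl arg_cong2[where f="(*)"])
    fix c assume "c \<in> C"
    have fin': "finite (PiE {..<k} (\<lambda>_. C))" using fin by (simp add: finite_PiE)
    have "(\<Sum>f\<in>PiE {..<k} (\<lambda>_. C). if (\<forall>i<k. R c (f i)) then (\<Prod>i<k. p (f i)) else 0)
        = (\<Sum>f\<in>{f \<in> PiE {..<k} (\<lambda>_. C). \<forall>i<k. R c (f i)}. \<Prod>i<k. p (f i))"
      using fin' by (simp add: sum.inter_filter)
    also have "{f \<in> PiE {..<k} (\<lambda>_. C). \<forall>i<k. R c (f i)} = PiE {..<k} (\<lambda>_. {d\<in>C. R c d})"
      by (auto simp: PiE_def extensional_def)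
    also have "(\<Sum>f\<in>PiE {..<k} (\<lambda>_. {d\<in>C. R c d}). \<Prod>i<k. p (f i)) = (\<Prod>i<k. \<Sum>d\<in>{d\<in>C. R c d}. p d)"
      using fin by (subst prod_sum_PiE) auto
    also have "\<dots> = (\<Sum>d\<in>{d\<in>C. R c d}. p d) ^ k" by simp
    finally show "(\<Sum>f\<in>PiE {..<k} (\<lambda>_. C). if (\<forall>i<k. R c (f i)) then (\<Prod>i<k. p (f i)) else 0) = (\<Sum>d\<in>{d\<in>C. R c d}. p d) ^ k" .
  qed
  finally show ?thesis .
qed


theorem theorem1:
  fixes k :: nat and \<alpha> :: real
    and V :: "'v set" and C :: "'c set" and pref :: "'v \<Rightarrow> 'c \<Rightarrow> 'c \<Rightarrow> bool"
  assumes "k \<ge> 1"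
    and "0 < \<alpha>" and "\<alpha> \<le> 1"
    and "\<alpha> / (1 - ln \<alpha>) \<ge> 2 / (real k + 1)"
    and "election V C pref"
    and "k \<le> card C"
  shows "\<exists>S. S \<subseteq> C \<and> card S = k \<and> undominated \<alpha> V C pref S"
proof -
  from assms(5) have V: "finite V" "V \<noteq> {}" and Cfin: "finite C"
    and lin: "\<And>v. v \<in> V \<Longrightarrow> strict_linear_order_on C (pref v)"
    by (auto simp: election_def)
  have irr: "\<And>v a. v \<in> V \<Longrightarrow> a \<in> C \<Longrightarrow> \<not> pref v a a"
    and tr: "\<And>v a b c. v \<in> V \<Longrightarrow> a \<in> C \<Longrightarrow> b \<in> C \<Longrightarrow> c \<in> C \<Longrightarrow> pref v a b \<Longrightarrow> pref v b c \<Longrightarrow> pref v a c"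
    and tot: "\<And>v a b. v \<in> V \<Longrightarrow> a \<in> C \<Longrightarrow> b \<in> C \<Longrightarrow> a \<noteq> b \<Longrightarrow> pref v a b \<or> pref v b a"
    using lin unfolding strict_linear_order_on_def by blast+
  have asym: "\<And>v a b. v \<in> V \<Longrightarrow> a \<in> C \<Longrightarrow> b \<in> C \<Longrightarrow> pref v a b \<Longrightarrow> \<not> pref v b a"
    using irr tr by blast
  have Cne: "C \<noteq> {}" using assms(1,6) by auto
  define n where "n = card V"
  have npos: "real n > 0" using V by (simp add: n_def card_gt_0_iff)
  show ?thesis
  proof (cases "\<alpha> = 1")
    case True
    obtain v0 where v0: "v0 \<in> V" using V by auto
    obtain c0 where c0: "c0 \<in> C" "\<forall>d\<in>C. d \<noteq> c0 \<longrightarrow> pref v0 c0 d"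
      using exists_max_elem[OF Cfin Cne, of "pref v0"] tr[OF v0] tot[OF v0] by blast
    have "k - 1 \<le> card (C - {c0})" using assms(6) c0 Cfin by (simp add: card_Diff_singleton)
    then obtain T where T: "T \<subseteq> C - {c0}" "card T = k - 1" "finite T"
      by (rule obtain_subset_with_card_n)
    define S where "S = insert c0 T"
    have c0T: "c0 \<notin> T" using T by auto
    have S1: "S \<subseteq> C" using T c0 by (auto simp: S_def)
    have S2: "card S = k" using T(2,3) c0T assms(1) by (simp add: S_def)
    note S = S1 S2
    have "undominated \<alpha> V C pref S"
      unfolding undominated_def
    proof
      fix a assume a: "a \<in> C"
      have "prefer_set V pref a S \<subseteq> V - {v0}"
      proof
        fix v assume "v \<in> prefer_set V pref a S"
        then have vV: "v \<in> V" and vS: "\<forall>b\<in>S. pref v a b" by (auto simp: prefer_set_def)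
        have "v \<noteq> v0"
        proof
          assume "v = v0"
          then have pa: "pref v0 a c0" using vS by (simp add: S_def)
          show False
          proof (cases "a = c0")
            case True
            then show False using pa irr[OF v0 a] by simp
          next
            case False
            then have "pref v0 c0 a" using c0(2) a by auto
            then show False using pa asym[OF v0 a c0(1)] by blast
          qed
        qed
        then show "v \<in> V - {v0}" using vV by simp
      qed
      then have "card (prefer_set V pref a S) \<le> card (V - {v0})"
        using V by (intro card_mono) auto
      also have "\<dots> < n" using V v0 by (simp add: n_def card_Diff_singleton card_gt_0_iff)
      finally have "real (card (prefer_set V pref a S)) < real n" by simp
      then show "real (card (prefer_set V pref a S)) / real (card V) < \<alpha>"
        using True npos by (simp add: n_def)
    qed
    then show ?thesis using S by blast
  next
    case False
    then have alt1: "\<alpha> < 1" using assms(3) by simp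
    define L where "L = - ln \<alpha>"
    have Lpos: "L > 0" using alt1 assms(2) by (simp add: L_def)
    have kpos: "real k \<ge> 1" using assms(1) by simp
    define t where "t = L / real k"
    have tpos: "t > 0" using Lpos kpos by (simp add: t_def)
    have kt: "real k * t = L" using kpos by (simp add: t_def)
    have hyp: "2 * (1 + L) \<le> \<alpha> * (real k + 1)"
    proof -
      have d: "1 - ln \<alpha> = 1 + L" by (simp add: L_def)
      have pos: "1 + L > 0" using Lpos by simp
      have "2 / (real k + 1) \<le> \<alpha> / (1 + L)" using assms(4) d by simp
      then show ?thesis using pos kpos by (simp add: field_simps)
    qed
    have tlt1: "t < 1"
    proof -
      have "\<alpha> * (real k + 1) \<le> 1 * (real k + 1)"
        using assms(3) kpos by (intro mult_right_mono) auto
      then have "2 * (1 + L) \<le> real k + 1" using order_trans[OF hyp] by simp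
      then have "L \<le> (real k - 1) / 2" by (simp add: field_simps)
      then have "L < real k" using kpos by simp
      then show ?thesis using kpos by (simp add: t_def)
    qed
    define Lt where "Lt = 1 - t"
    have Lt: "0 < Lt" "Lt \<le> 1" using tlt1 tpos by (auto simp: Lt_def)
    have powlt: "Lt ^ k < \<alpha>"
    proof -
      have e1: "1 - t/2 \<le> exp (- (t/2))" using exp_ge_add_one_self[of "-(t/2)"] by simp
      have "(1 - t/2)^2 \<le> exp (-(t/2))^2" using e1 tlt1 by (intro power_mono) auto
      also have "exp (-(t/2))^2 = exp (-t)"
        unfolding power2_eq_square exp_add[symmetric] by (rule arg_cong[where f=exp]) linarith
      finally have "1 - t + t^2/4 \<le> exp (-t)" by (simp add: power2_eq_square field_simps)
      moreover have "t^2 > 0" using tpos by simp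
      ultimately have "Lt < exp (-t)" unfolding Lt_def by linarith
      then have "Lt ^ k < exp (-t) ^ k" using Lt assms(1) by (intro power_strict_mono) auto
      also have "exp (-t) ^ k = exp (- L)" using kt by (simp add: exp_of_nat_mult[symmetric] mult.commute)
      also have "\<dots> = \<alpha>" using assms(2) by (simp add: L_def)
      finally show ?thesis .
    qed
    define r where "r = nat \<lceil>\<alpha> * real n\<rceil>"
    have rge: "\<alpha> * real n \<le> real r" unfolding r_def by linarith
    have rle: "r \<le> n" unfolding r_def using assms(3) npos by simp
    have rpos: "real r > 0" using rge assms(2) npos by (smt (verit) mult_pos_pos)
    define \<epsilon> where "\<epsilon> = (real r * Lt - real n * Lt ^ (k+1)) / (2 * (real k + 1))"
    have slack: "real n * Lt ^ (k+1) < real r * Lt"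
    proof -
      have "real n * Lt ^ (k+1) = real n * Lt ^ k * Lt" by simp
      also have "\<dots> < real n * \<alpha> * Lt" using powlt npos Lt by simp
      also have "\<dots> \<le> real r * Lt" using rge Lt by (simp add: mult.commute)
      finally show ?thesis .
    qed
    have epos: "\<epsilon> > 0" using slack kpos by (simp add: \<epsilon>_def)
    have key: "real r * t + real n * Lt ^ (k+1) / (real k + 1) + \<epsilon> < (real r)^2 / (2 * real n)"
    proof -
      have aux: "\<And>X D. D > 0 \<Longrightarrow> real n * X / D + (real r * Lt - real n * X) / (2 * D) = (real r * Lt + real n * X) / (2 * D)"
        by (simp add: field_simps)
      have "real r * t + real n * Lt ^ (k+1) / (real k + 1) + \<epsilon>
          = real r * t + (real n * Lt ^ (k+1) / (real k + 1) + \<epsilon>)" by simp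
      also have "\<dots> = real r * t + (real r * Lt + real n * Lt ^ (k+1)) / (2 * (real k + 1))"
        unfolding \<epsilon>_def using aux[of "real k + 1" "Lt ^ (k+1)"] kpos by simp
      also have "\<dots> < real r * t + (real r * Lt + real r * Lt) / (2 * (real k + 1))"
      proof -
        have A: "real r * Lt + real n * Lt ^ (k+1) < real r * Lt + real r * Lt" using slack by linarith
        have D: "0 < 2 * (real k + 1)" using kpos by simp
        show ?thesis using divide_strict_right_mono[OF A D] by linarith
      qed
      also have "\<dots> = real r * (1 + L) / (real k + 1)"
        using kpos unfolding kt[symmetric] by (simp add: Lt_def field_simps)
      also have "\<dots> \<le> real r * \<alpha> / 2"
      proof -
        have "(1 + L) / (real k + 1) \<le> \<alpha> / 2" using hyp kpos by (simp add: field_simps)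
        then have "real r * ((1 + L) / (real k + 1)) \<le> real r * (\<alpha> / 2)"
          using rpos by (intro mult_left_mono) auto
        then show ?thesis by simp
      qed
      also have "\<dots> \<le> (real r)^2 / (2 * real n)"
        using rge rpos npos by (simp add: field_simps power2_eq_square)
      finally show ?thesis .
    qed
    define J where "J = {(a, W). a \<in> C \<and> W \<subseteq> V \<and> card W = r}"
    define M where "M c j = real (card {v \<in> snd j. pref v (fst j) c})" for c and j :: "'c \<times> 'v set"
    define Vv where "Vv = real r - (real r)\<^sup>2 / (2 * real (card V))"
    have finJ: "finite J"
    proof -
      have "J \<subseteq> C \<times> Pow V" using J_def by auto
      then show ?thesis using V Cfin finite_subset by blast
    qed
    have Jne: "J \<noteq> {}"
    proof -
      obtain a where "a \<in> C" using Cne by auto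
      moreover have "r \<le> card V" using rle by (simp add: n_def)
      then obtain W where "W \<subseteq> V" "card W = r" "finite W" by (rule obtain_subset_with_card_n)
      ultimately have "(a, W) \<in> J" by (simp add: J_def)
      then show ?thesis by auto
    qed
    have Mb: "0 \<le> M c j \<and> M c j \<le> real n" if "c \<in> C" "j \<in> J" for c j
    proof -
      have "{v \<in> snd j. pref v (fst j) c} \<subseteq> V" using that J_def by auto
      then have "card {v \<in> snd j. pref v (fst j) c} \<le> n" using V by (simp add: n_def card_mono)
      then show ?thesis by (simp add: M_def)
    qed
    have br: "\<exists>c\<in>C. (\<Sum>j\<in>J. \<mu> j * M c j) \<le> Vv" if "\<forall>j\<in>J. 0 \<le> \<mu> j" "(\<Sum>j\<in>J. \<mu> j) = 1" for \<mu>
      using best_response[OF V Cfin asym J_def that] by (simp add: M_def Vv_def)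
    obtain p where p: "\<forall>c\<in>C. 0 \<le> p c" "(\<Sum>c\<in>C. p c) = 1"
      and pJ: "\<forall>j\<in>J. (\<Sum>c\<in>C. p c * M c j) \<le> Vv + \<epsilon>"
      using minimax_approx[OF Cfin Cne finJ Jne Mb npos br epos] by blast
    define g where "g v c = wt C (pref v) p Lt c" for v c
    have g0: "0 \<le> g v c" for v c by (simp add: g_def wt_def)
    have h0: "0 \<le> (\<Sum>c\<in>C. if (\<forall>i<k. pref v c (f i)) then g v c else 0)" for v f
      by (intro sum_nonneg) (simp add: g0)
    define h where "h v f = (\<Sum>c\<in>C. if (\<forall>i<k. pref v c (f i)) then g v c else 0)" for v and f :: "nat \<Rightarrow> 'c"
    define G where "G f = (\<Sum>v\<in>V. h v f)" for f
    define P where "P = PiE {..<k} (\<lambda>_. C)"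
    define \<mu> where "\<mu> f = (\<Prod>i<k. p (f i))" for f
    have finP: "finite P" using Cfin by (simp add: P_def finite_PiE)
    have mu0: "\<forall>f\<in>P. 0 \<le> \<mu> f" using p by (auto simp: \<mu>_def P_def intro!: prod_nonneg)
    have mu1: "(\<Sum>f\<in>P. \<mu> f) = 1"
    proof -
      have "(\<Sum>f\<in>P. \<mu> f) = (\<Prod>i<k. \<Sum>c\<in>C. p c)"
        unfolding P_def \<mu>_def using Cfin by (subst prod_sum_PiE) auto
      then show ?thesis using p by simp
    qed
    have EG: "(\<Sum>f\<in>P. \<mu> f * G f) \<le> real n * Lt ^ (k+1) / (real k + 1)"
    proof -
      have "(\<Sum>f\<in>P. \<mu> f * G f) = (\<Sum>v\<in>V. \<Sum>f\<in>P. \<mu> f * h v f)"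
        unfolding G_def by (simp add: sum_distrib_left sum.swap[of _ P V])
      also have "\<dots> = (\<Sum>v\<in>V. \<Sum>c\<in>C. g v c * (qb C (pref v) p c) ^ k)"
        unfolding P_def \<mu>_def h_def qb_def by (intro sum.cong refl tuple_expect[OF Cfin])
      also have "\<dots> \<le> (\<Sum>v\<in>V. Lt ^ (k+1) / (real k + 1))"
      proof (rule sum_mono)
        fix v assume v: "v \<in> V"
        have "(\<Sum>c\<in>C. g v c * (qb C (pref v) p c) ^ k) \<le> (min (\<Sum>c\<in>C. p c) Lt) ^ (k+1) / (k+1)"
          unfolding g_def wt_def qb_def
          by (rule riemann[where R="pref v", OF Cfin p(1) _ irr[OF v] tr[OF v] tot[OF v]]) (use Lt in simp)
        then show "(\<Sum>c\<in>C. g v c * (qb C (pref v) p c) ^ k) \<le> Lt ^ (k+1) / (real k + 1)"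
          using p(2) Lt by (simp add: min_def add.commute)
      qed
      also have "\<dots> = real n * Lt ^ (k+1) / (real k + 1)" by (simp add: n_def)
      finally show ?thesis .
    qed
    obtain f where f: "f \<in> P" "G f \<le> real n * Lt ^ (k+1) / (real k + 1)"
      using avg_exists[OF finP mu0 mu1 EG] by blast
    define S0 where "S0 = f ` {..<k}"
    have S0C: "S0 \<subseteq> C" using f(1) by (auto simp: S0_def P_def PiE_def Pi_def)
    have cardS0: "card S0 \<le> k" unfolding S0_def using card_image_le[of "{..<k}" f] by simp
    have "k - card S0 \<le> card (C - S0)" using assms(6) S0C Cfin by (simp add: card_Diff_subset finite_subset)
    then obtain T where T: "T \<subseteq> C - S0" "card T = k - card S0" "finite T"
      by (rule obtain_subset_with_card_n)
    define S where "S = S0 \<union> T"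
    have SC: "S \<subseteq> C" using S0C T by (auto simp: S_def)
    have cardS: "card S = k"
    proof -
      have "finite S0" using S0C Cfin finite_subset by blast
      then have "card S = card S0 + card T" unfolding S_def using T by (subst card_Un_disjoint) auto
      then show ?thesis using T cardS0 by simp
    qed
    have "undominated \<alpha> V C pref S"
      unfolding undominated_def
    proof (rule ballI, rule ccontr)
      fix a assume a: "a \<in> C"
      define PS where "PS = prefer_set V pref a S"
      assume "\<not> real (card (prefer_set V pref a S)) / real (card V) < \<alpha>"
      then have "\<alpha> * real n \<le> real (card PS)" using npos by (simp add: PS_def n_def field_simps)
      then have "r \<le> card PS" by (simp add: r_def)
      then obtain W where W: "W \<subseteq> PS" "card W = r" "finite W" by (rule obtain_subset_with_card_n)
      have WV: "W \<subseteq> V" using W by (auto simp: PS_def prefer_set_def)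
      have aW: "\<forall>v\<in>W. \<forall>s\<in>S. pref v a s" using W by (auto simp: PS_def prefer_set_def)
      have "(a, W) \<in> J" using a WV W by (simp add: J_def)
      then have up: "(\<Sum>c\<in>C. p c * M c (a, W)) \<le> Vv + \<epsilon>" using pJ by blast
      have eqW: "(\<Sum>c\<in>C. p c * M c (a, W)) = (\<Sum>v\<in>W. qb C (pref v) p a)"
      proof -
        have "(\<Sum>c\<in>C. p c * M c (a, W)) = (\<Sum>c\<in>C. \<Sum>v\<in>W. if pref v a c then p c else 0)"
          unfolding M_def using W(3) by (simp add: sum.If_cases Int_def sum_distrib_left mult.commute)
        also have "\<dots> = (\<Sum>v\<in>W. \<Sum>c\<in>C. if pref v a c then p c else 0)" by (rule sum.swap)
        also have "\<dots> = (\<Sum>v\<in>W. qb C (pref v) p a)"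
          unfolding qb_def using Cfin by (simp add: sum.inter_filter)
        finally show ?thesis .
      qed
      have lowv: "Lt - h v f \<le> qb C (pref v) p a" if v: "v \<in> W" for v
      proof -
        have vV: "v \<in> V" using v WV by auto
        have "1 - (\<Sum>c\<in>{c\<in>C. \<forall>s\<in>S. pref v c s}. p c) \<le> qb C (pref v) p a"
          by (rule below_ge[OF Cfin p lin[OF vV] SC a]) (use aW v in auto)
        moreover have "(\<Sum>c\<in>{c\<in>C. \<forall>s\<in>S. pref v c s}. p c) \<le> (\<Sum>c\<in>{c\<in>C. \<forall>s\<in>S0. pref v c s}. p c)"
          using Cfin p by (intro sum_mono2) (auto simp: S_def)
        moreover have "(\<Sum>c\<in>{c\<in>C. \<forall>s\<in>S0. pref v c s}. p c) \<le> t + (\<Sum>c\<in>{c\<in>C. \<forall>s\<in>S0. pref v c s}. wt C (pref v) p (1 - t) c)"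
          by (rule threshold[OF Cfin p lin[OF vV]]) (use tpos in auto)
        moreover have "(\<Sum>c\<in>{c\<in>C. \<forall>s\<in>S0. pref v c s}. wt C (pref v) p (1 - t) c) = h v f"
        proof -
          have "{c\<in>C. \<forall>s\<in>S0. pref v c s} = {c\<in>C. \<forall>i<k. pref v c (f i)}" by (auto simp: S0_def)
          then show ?thesis unfolding h_def g_def Lt_def using Cfin by (simp add: sum.inter_filter)
        qed
        ultimately show ?thesis by (simp add: Lt_def)
      qed
      have "real r * Lt - G f \<le> (\<Sum>v\<in>W. qb C (pref v) p a)"
      proof -
        have "(\<Sum>v\<in>W. h v f) \<le> G f"
          unfolding G_def using V WV h0 by (intro sum_mono2) (auto simp: h_def)
        moreover have "(\<Sum>v\<in>W. Lt - h v f) \<le> (\<Sum>v\<in>W. qb C (pref v) p a)"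
          using lowv by (rule sum_mono)
        ultimately show ?thesis using W by (simp add: sum_subtractf)
      qed
      then have "real r * Lt - real n * Lt ^ (k+1) / (real k + 1) \<le> Vv + \<epsilon>"
        using f(2) up eqW by linarith
      then show False using key by (simp add: Vv_def Lt_def n_def algebra_simps)
    qed
    then show ?thesis using SC cardS by blast
  qed
qed

end
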